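(* Let $X_0,X_1,X_2,\dots$ be i.i.d. complex-valued random variables with ${\bf E}[X_i]=0$, ${\bf E}|X_i|^2=1$, ${\bf E}\big[(\mathrm{Re}\,X_i)^2\big]={\bf E}\big[(\mathrm{Im}\,X_i)^2\big]$ and ${\bf E}\big[\mathrm{Re}(X_i)\,\mathrm{Im}(X_i)\big]=0$. Let $Y_0,Y_1,\dots$ be i.i.d. complex Gaussian random variables, each with density $\pi^{-1}e^{-|y|^2}$ on $\mathbb{C}$. For a sequence $\boldsymbol{x}=(x_0,x_1,\dots)$ write $f(\boldsymbol{x},z)=\sum_{k=0}^\infty x_k z^k$. For $u,z$ in the open unit disk $U(0,1)=\{z\in\mathbb{C}:|z|<1\}$ let $$\Phi(u;z)=\frac{z-u}{1-\overline{u}z},\qquad \Delta(u,z)=\frac{1-\overline{u}z}{\sqrt{1-|u|^2}}.$$ Then for every $n\in\mathbb{N}$, all $z_1,\dots,z_n\in U(0,1)$ and all $\lambda_1,\dots,\lambda_n\in\mathbb{C}$, $$\mathrm{Re}\left[\sum_{i=1}^n\lambda_i\,\frac{f(\boldsymbol{X},\Phi(u;z_i))}{\Delta(u,z_i)}\right]\ \Longrightarrow\ \mathrm{Re}\left[\sum_{i=1}^n\lambda_i\, f(\boldsymbol{Y},z_i)\right]\quad\text{as } |u|\uparrow 1,$$ where $\Longrightarrow$ denotes convergence in distribution.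
   Context: The limit $|u|\uparrow 1$ means $u\in U(0,1)$ with $|u|\to1$ in any manner. The series defining $f(\boldsymbol{X},\cdot)$ and $f(\boldsymbol{Y},\cdot)$ converge almost surely on $U(0,1)$. *)

theory Defs
  imports "HOL-Probability.Probability"
begin

definition rps :: "(nat \<Rightarrow> complex) \<Rightarrow> complex \<Rightarrow> complex" where
  "rps x z = (\<Sum>k. x k * z ^ k)"

definition Phi :: "complex \<Rightarrow> complex \<Rightarrow> complex" where
  "Phi u z = (z - u) / (1 - cnj u * z)"

definition Delta :: "complex \<Rightarrow> complex \<Rightarrow> complex" where
  "Delta u z = (1 - cnj u * z) / complex_of_real (sqrt (1 - (cmod u)\<^sup>2))"

end

theory Submission
  imports Defs
begin

lemma ae_summable_r:
  fixes Z :: "nat \<Rightarrow> 'a \<Rightarrow> complex"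
  assumes M: "prob_space M" and meas: "\<And>k. Z k \<in> borel_measurable M"
    and ident: "\<And>k. distr M borel (Z k) = distr M borel (Z 0)"
    and int: "integrable M (\<lambda>\<omega>. cmod (Z 0 \<omega>))"
    and r: "0 \<le> r" "r < 1"
  shows "AE \<omega> in M. summable (\<lambda>k. cmod (Z k \<omega>) * r ^ k)"
proof -
  have [measurable]: "Z k \<in> borel_measurable M" for k by (rule meas)
  define C where "C = (\<integral>\<^sup>+\<omega>. ennreal (cmod (Z 0 \<omega>)) \<partial>M)"
  have Cfin: "C < \<infinity>" using int unfolding C_def integrable_iff_bounded by simp
  have Ck: "(\<integral>\<^sup>+\<omega>. ennreal (cmod (Z k \<omega>)) \<partial>M) = C" for k
  proof -
    have "(\<integral>\<^sup>+\<omega>. ennreal (cmod (Z k \<omega>)) \<partial>M) = (\<integral>\<^sup>+x. ennreal (cmod x) \<partial>distr M borel (Z k))"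
      by (simp add: nn_integral_distr)
    also have "\<dots> = (\<integral>\<^sup>+x. ennreal (cmod x) \<partial>distr M borel (Z 0))" by (subst ident) (rule refl)
    also have "\<dots> = C" unfolding C_def by (simp add: nn_integral_distr)
    finally show ?thesis .
  qed
  have "(\<integral>\<^sup>+\<omega>. (\<Sum>k. ennreal (cmod (Z k \<omega>) * r ^ k)) \<partial>M)
      = (\<Sum>k. \<integral>\<^sup>+\<omega>. ennreal (cmod (Z k \<omega>) * r ^ k) \<partial>M)"
    by (rule nn_integral_suminf) simp
  also have "\<dots> = (\<Sum>k. ennreal (r ^ k) * C)"
  proof (rule suminf_cong)
    fix k
    have "(\<integral>\<^sup>+\<omega>. ennreal (cmod (Z k \<omega>) * r ^ k) \<partial>M) = (\<integral>\<^sup>+\<omega>. ennreal (r ^ k) * ennreal (cmod (Z k \<omega>)) \<partial>M)"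
      using r by (intro nn_integral_cong) (simp add: ennreal_mult' mult.commute)
    also have "\<dots> = ennreal (r ^ k) * C" by (subst nn_integral_cmult) (simp_all add: Ck)
    finally show "(\<integral>\<^sup>+\<omega>. ennreal (cmod (Z k \<omega>) * r ^ k) \<partial>M) = ennreal (r ^ k) * C" .
  qed
  also have "\<dots> = (\<Sum>k. ennreal (r ^ k)) * C" by (rule ennreal_suminf_multc)
  also have "(\<Sum>k. ennreal (r ^ k)) = ennreal (1 / (1 - r))"
    using r by (intro suminf_ennreal_eq geometric_sums) simp_all
  finally have "(\<integral>\<^sup>+\<omega>. (\<Sum>k. ennreal (cmod (Z k \<omega>) * r ^ k)) \<partial>M) \<noteq> \<infinity>"
    using Cfin by (simp add: ennreal_mult_eq_top_iff)
  then have "AE \<omega> in M. (\<Sum>k. ennreal (cmod (Z k \<omega>) * r ^ k)) \<noteq> \<infinity>"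
    by (intro nn_integral_PInf_AE) simp_all
  then show ?thesis
    by eventually_elim (rule summable_suminf_not_top, use r in auto)
qed

lemma ae_summable:
  fixes Z :: "nat \<Rightarrow> 'a \<Rightarrow> complex"
  assumes M: "prob_space M" and meas: "\<And>k. Z k \<in> borel_measurable M"
    and ident: "\<And>k. distr M borel (Z k) = distr M borel (Z 0)"
    and int: "integrable M (\<lambda>\<omega>. cmod (Z 0 \<omega>))"
  shows "AE \<omega> in M. \<forall>a. cmod a < 1 \<longrightarrow> summable (\<lambda>k. norm (Z k \<omega> * a ^ k))"
proof -
  have "AE \<omega> in M. \<forall>j::nat. summable (\<lambda>k. cmod (Z k \<omega>) * (1 - 1 / (real j + 2)) ^ k)"
    by (subst AE_all_countable, intro allI ae_summable_r[where Z=Z, OF M meas ident int]) (simp_all add: field_simps)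
  then show ?thesis
  proof eventually_elim
    case (elim \<omega>)
    show ?case
    proof (intro allI impI)
      fix a :: complex assume a: "cmod a < 1"
      obtain j :: nat where j: "1 / (1 - cmod a) < real j" using reals_Archimedean2 by blast
      have "cmod a \<le> 1 - 1 / (real j + 2)"
      proof -
        have "0 < 1 - cmod a" using a by simp
        then have "1 < real j * (1 - cmod a)" using j by (simp add: field_simps)
        moreover have "real j * (1 - cmod a) \<le> (real j + 2) * (1 - cmod a)" using a by (intro mult_right_mono) simp_all
        ultimately have "1 < (real j + 2) * (1 - cmod a)" by linarith
        then show ?thesis by (simp add: field_simps)
      qed
      then show "summable (\<lambda>k. norm (Z k \<omega> * a ^ k))"
        by (intro summable_comparison_test[OF _ elim[rule_format, of j]])
           (auto intro!: exI[of _ 0] mult_left_mono power_mono simp: norm_mult norm_power)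
    qed
  qed
qed

lemma char_limit:
  fixes Z :: "nat \<Rightarrow> 'a \<Rightarrow> complex" and e w :: "nat \<Rightarrow> complex" and t :: real
  assumes M: "prob_space M" and meas: "\<And>k. Z k \<in> borel_measurable M"
    and indep: "prob_space.indep_vars M (\<lambda>_. borel) Z UNIV"
    and ident: "\<And>k. distr M borel (Z k) = distr M borel (Z 0)"
    and int: "integrable M (\<lambda>\<omega>. cmod (Z 0 \<omega>))"
    and w: "\<And>i. i < n \<Longrightarrow> cmod (w i) < 1"
  shows "(\<lambda>\<omega>. Re (\<Sum>i<n. e i * rps (\<lambda>k. Z k \<omega>) (w i))) \<in> borel_measurable M"
    and "(\<lambda>N. \<Prod>k<N. char (distr M borel (\<lambda>\<omega>. Re ((\<Sum>i<n. e i * w i ^ k) * Z 0 \<omega>))) t)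
          \<longlonglongrightarrow> char (distr M borel (\<lambda>\<omega>. Re (\<Sum>i<n. e i * rps (\<lambda>k. Z k \<omega>) (w i)))) t"
proof -
  interpret prob_space M by (rule M)
  have [measurable]: "Z k \<in> borel_measurable M" for k by (rule meas)
  define F where "F = (\<lambda>\<omega>. Re (\<Sum>i<n. e i * rps (\<lambda>k. Z k \<omega>) (w i)))"
  define \<alpha> where "\<alpha> = (\<lambda>k. \<Sum>i<n. e i * w i ^ k)"
  define V where "V = (\<lambda>k \<omega>. Re (\<alpha> k * Z k \<omega>))"
  have Fm[measurable]: "F \<in> borel_measurable M" unfolding F_def rps_def by measurable
  then show "(\<lambda>\<omega>. Re (\<Sum>i<n. e i * rps (\<lambda>k. Z k \<omega>) (w i))) \<in> borel_measurable M"
    unfolding F_def .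
  have Vm[measurable]: "V k \<in> borel_measurable M" for k unfolding V_def by measurable
  have lim: "AE \<omega> in M. (\<lambda>N. \<Sum>k<N. V k \<omega>) \<longlonglongrightarrow> F \<omega>"
    using ae_summable[where Z=Z, OF M meas ident int]
  proof eventually_elim
    case (elim \<omega>)
    have "(\<lambda>N. \<Sum>k<N. Z k \<omega> * w i ^ k) \<longlonglongrightarrow> rps (\<lambda>k. Z k \<omega>) (w i)" if "i < n" for i
      unfolding rps_def
      by (rule summable_LIMSEQ, rule summable_norm_cancel, rule elim[rule_format], rule w[OF that])
    then have "(\<lambda>N. Re (\<Sum>i<n. e i * (\<Sum>k<N. Z k \<omega> * w i ^ k))) \<longlonglongrightarrow> F \<omega>"
      unfolding F_def by (intro tendsto_intros) auto
    moreover have "(\<Sum>k<N. V k \<omega>) = Re (\<Sum>i<n. e i * (\<Sum>k<N. Z k \<omega> * w i ^ k))" for N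
      unfolding V_def \<alpha>_def
      by (simp add: Re_sum[symmetric] sum_distrib_left sum_distrib_right sum.swap[of _ "{..<N}"] ac_simps)
    ultimately show ?case by simp
  qed
  have "(\<lambda>N. CLINT \<omega>|M. iexp (t * (\<Sum>k<N. V k \<omega>))) \<longlonglongrightarrow> (CLINT \<omega>|M. iexp (t * F \<omega>))"
  proof (rule integral_dominated_convergence[where w="\<lambda>_. 1"])
    show "AE \<omega> in M. (\<lambda>N. iexp (t * (\<Sum>k<N. V k \<omega>))) \<longlonglongrightarrow> iexp (t * F \<omega>)"
      using lim by eventually_elim (intro tendsto_intros)
  qed (auto simp: norm_exp_i_times)
  moreover have "(CLINT \<omega>|M. iexp (t * (\<Sum>k<N. V k \<omega>))) =
      (\<Prod>k<N. char (distr M borel (\<lambda>\<omega>. Re (\<alpha> k * Z 0 \<omega>))) t)" for N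
  proof -
    have "(CLINT \<omega>|M. iexp (t * (\<Sum>k<N. V k \<omega>))) = char (distr M borel (\<lambda>\<omega>. \<Sum>k<N. V k \<omega>)) t"
      by (simp add: char_def integral_distr)
    also have "\<dots> = (\<Prod>k<N. char (distr M borel (V k)) t)"
    proof (rule char_distr_sum)
      show "indep_vars (\<lambda>i. borel) V {..<N}"
        unfolding V_def
        by (rule indep_vars_compose2[where X=Z, OF indep_vars_subset[OF indep]]) auto
    qed
    also have "\<dots> = (\<Prod>k<N. char (distr M borel (\<lambda>\<omega>. Re (\<alpha> k * Z 0 \<omega>))) t)"
    proof (rule prod.cong[OF refl])
      fix k
      have "distr M borel (V k) = distr (distr M borel (Z k)) borel (\<lambda>z. Re (\<alpha> k * z))"
        unfolding V_def by (subst distr_distr) (auto simp: comp_def)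
      also have "\<dots> = distr (distr M borel (Z 0)) borel (\<lambda>z. Re (\<alpha> k * z))" by (subst ident) (rule refl)
      also have "\<dots> = distr M borel (\<lambda>\<omega>. Re (\<alpha> k * Z 0 \<omega>))" by (subst distr_distr) (auto simp: comp_def)
      finally show "char (distr M borel (V k)) t = char (distr M borel (\<lambda>\<omega>. Re (\<alpha> k * Z 0 \<omega>))) t" by simp
    qed
    finally show ?thesis .
  qed
  moreover have "(CLINT \<omega>|M. iexp (t * F \<omega>)) = char (distr M borel F) t"
    by (simp add: char_def integral_distr)
  ultimately show "(\<lambda>N. \<Prod>k<N. char (distr M borel (\<lambda>\<omega>. Re ((\<Sum>i<n. e i * w i ^ k) * Z 0 \<omega>))) t)
          \<longlonglongrightarrow> char (distr M borel (\<lambda>\<omega>. Re (\<Sum>i<n. e i * rps (\<lambda>k. Z k \<omega>) (w i)))) t"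
    unfolding F_def \<alpha>_def by simp
qed

lemma sq_sums:
  fixes e w :: "nat \<Rightarrow> complex"
  assumes w: "\<And>i. i < n \<Longrightarrow> cmod (w i) < 1"
  shows "(\<lambda>k. (cmod (\<Sum>i<n. e i * w i ^ k))\<^sup>2) sums
           Re (\<Sum>i<n. \<Sum>j<n. e i * cnj (e j) / (1 - w i * cnj (w j)))"
proof -
  have eq: "complex_of_real ((cmod (\<Sum>i<n. e i * w i ^ k))\<^sup>2) =
      (\<Sum>i<n. \<Sum>j<n. e i * cnj (e j) * (w i * cnj (w j)) ^ k)" for k
    unfolding complex_norm_square
    by (simp add: sum_distrib_left sum_distrib_right power_mult_distrib cnj_sum ac_simps)
       (rule sum.swap)
  have "(\<lambda>k. \<Sum>i<n. \<Sum>j<n. e i * cnj (e j) * (w i * cnj (w j)) ^ k) sums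
      (\<Sum>i<n. \<Sum>j<n. e i * cnj (e j) / (1 - w i * cnj (w j)))"
  proof (intro sums_sum)
    fix i j assume "i \<in> {..<n}" "j \<in> {..<n}"
    then have "norm (w i * cnj (w j)) < 1"
      using w[of i] w[of j] by (simp add: norm_mult) (metis le_less_trans less_eq_real_def mult_left_le norm_ge_zero)
    then show "(\<lambda>k. e i * cnj (e j) * (w i * cnj (w j)) ^ k) sums (e i * cnj (e j) / (1 - w i * cnj (w j)))"
      using sums_mult[OF geometric_sums, of "w i * cnj (w j)" "e i * cnj (e j)"] by (simp add: divide_inverse)
  qed
  then have "(\<lambda>k. complex_of_real ((cmod (\<Sum>i<n. e i * w i ^ k))\<^sup>2)) sums
      (\<Sum>i<n. \<Sum>j<n. e i * cnj (e j) / (1 - w i * cnj (w j)))" by (simp only: eq)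
  then show ?thesis by (simp add: sums_complex_iff)
qed

lemma absmul_le: fixes a b :: real shows "\<bar>a\<bar> * \<bar>b\<bar> \<le> a\<^sup>2 + b\<^sup>2"
proof -
  have "2 * \<bar>a\<bar> * \<bar>b\<bar> \<le> \<bar>a\<bar>\<^sup>2 + \<bar>b\<bar>\<^sup>2" by (rule sum_squares_bound)
  then have "2 * (\<bar>a\<bar> * \<bar>b\<bar>) \<le> a\<^sup>2 + b\<^sup>2" by (simp add: mult.assoc)
  moreover have "0 \<le> \<bar>a\<bar> * \<bar>b\<bar>" by simp
  ultimately show ?thesis by linarith
qed

lemma char_factor_bound:
  fixes X0 :: "'a \<Rightarrow> complex" and \<alpha> :: complex and t \<epsilon> :: real
  assumes M: "prob_space M" and meas[measurable]: "X0 \<in> borel_measurable M"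
    and X_sq_int: "integrable M (\<lambda>\<omega>. (cmod (X0 \<omega>))\<^sup>2)"
    and X_mean: "prob_space.expectation M X0 = 0"
    and X_var: "prob_space.expectation M (\<lambda>\<omega>. (cmod (X0 \<omega>))\<^sup>2) = 1"
    and X_ReIm: "prob_space.expectation M (\<lambda>\<omega>. (Re (X0 \<omega>))\<^sup>2)
                 = prob_space.expectation M (\<lambda>\<omega>. (Im (X0 \<omega>))\<^sup>2)"
    and X_cov: "prob_space.expectation M (\<lambda>\<omega>. Re (X0 \<omega>) * Im (X0 \<omega>)) = 0"
    and eps: "cmod \<alpha> \<le> \<epsilon>"
  shows "cmod (char (distr M borel (\<lambda>\<omega>. Re (\<alpha> * X0 \<omega>))) t - (1 - t\<^sup>2 * (cmod \<alpha>)\<^sup>2 / 4))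
     \<le> (cmod \<alpha>)\<^sup>2 * (t\<^sup>2 / 6 * prob_space.expectation M (\<lambda>\<omega>. min (6 * (cmod (X0 \<omega>))\<^sup>2) (\<bar>t\<bar> * \<epsilon> * (cmod (X0 \<omega>)) ^ 3)))"
proof -
  interpret prob_space M by (rule M)
  define V where "V = (\<lambda>\<omega>. Re (\<alpha> * X0 \<omega>))"
  define a1 where "a1 = Re \<alpha>"
  define a2 where "a2 = Im \<alpha>"
  have Vm[measurable]: "V \<in> borel_measurable M" unfolding V_def by measurable
  have Veq: "V \<omega> = a1 * Re (X0 \<omega>) - a2 * Im (X0 \<omega>)" for \<omega> unfolding V_def a1_def a2_def by simp
  have cmod_int: "integrable M (\<lambda>\<omega>. cmod (X0 \<omega>))"
    by (rule square_integrable_imp_integrable) (simp_all add: X_sq_int)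
  have X_int: "integrable M X0" using cmod_int by (simp add: integrable_norm_iff)
  have iA2: "integrable M (\<lambda>\<omega>. (Re (X0 \<omega>))\<^sup>2)"
    by (rule Bochner_Integration.integrable_bound[OF X_sq_int]) (auto intro!: AE_I2 simp: cmod_power2)
  have iB2: "integrable M (\<lambda>\<omega>. (Im (X0 \<omega>))\<^sup>2)"
    by (rule Bochner_Integration.integrable_bound[OF X_sq_int]) (auto intro!: AE_I2 simp: cmod_power2)
  have iAB: "integrable M (\<lambda>\<omega>. Re (X0 \<omega>) * Im (X0 \<omega>))"
    by (rule Bochner_Integration.integrable_bound[OF X_sq_int])
       (auto intro!: AE_I2 simp: cmod_power2 abs_mult absmul_le)
  have "expectation (\<lambda>\<omega>. (Re (X0 \<omega>))\<^sup>2) + expectation (\<lambda>\<omega>. (Im (X0 \<omega>))\<^sup>2) = 1"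
    using X_var Bochner_Integration.integral_add[OF iA2 iB2] by (simp add: cmod_power2)
  then have EA2: "expectation (\<lambda>\<omega>. (Re (X0 \<omega>))\<^sup>2) = 1/2" and EB2: "expectation (\<lambda>\<omega>. (Im (X0 \<omega>))\<^sup>2) = 1/2"
    using X_ReIm by auto
  have hV0: "\<bar>V \<omega>\<bar> \<le> cmod \<alpha> * cmod (X0 \<omega>)" for \<omega>
    unfolding V_def by (metis abs_Re_le_cmod norm_mult)
  have V_int: "integrable M V"
    by (rule Bochner_Integration.integrable_bound[where f="\<lambda>\<omega>. cmod \<alpha> * cmod (X0 \<omega>)"])
       (auto simp: cmod_int hV0 intro!: AE_I2)
  have hV2: "(V \<omega>)\<^sup>2 \<le> (cmod \<alpha>)\<^sup>2 * (cmod (X0 \<omega>))\<^sup>2" for \<omega>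
    using power_mono[OF hV0[of \<omega>], of 2] by (simp add: power_mult_distrib)
  have V2_int: "integrable M (\<lambda>\<omega>. (V \<omega>)\<^sup>2)"
    by (rule Bochner_Integration.integrable_bound[where f="\<lambda>\<omega>. (cmod \<alpha>)\<^sup>2 * (cmod (X0 \<omega>))\<^sup>2"])
       (auto simp: X_sq_int hV2 intro!: AE_I2)
  have EV: "expectation V = 0"
    using X_mean X_int unfolding V_def by simp
  have "expectation (\<lambda>\<omega>. (V \<omega>)\<^sup>2) =
      expectation (\<lambda>\<omega>. a1\<^sup>2 * (Re (X0 \<omega>))\<^sup>2 + a2\<^sup>2 * (Im (X0 \<omega>))\<^sup>2 - 2 * a1 * a2 * (Re (X0 \<omega>) * Im (X0 \<omega>)))"
    by (intro Bochner_Integration.integral_cong) (simp_all add: Veq power2_eq_square algebra_simps)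
  also have "\<dots> = a1\<^sup>2 * (1/2) + a2\<^sup>2 * (1/2) - 2 * a1 * a2 * 0"
    using iA2 iB2 iAB X_cov by (simp add: EA2 EB2)
  also have "\<dots> = (cmod \<alpha>)\<^sup>2 / 2" by (simp add: a1_def a2_def cmod_power2)
  finally have EV2: "expectation (\<lambda>\<omega>. (V \<omega>)\<^sup>2) = (cmod \<alpha>)\<^sup>2 / 2" .
  have var: "variance V = (cmod \<alpha>)\<^sup>2 / 2" using EV EV2 by simp
  have e0: "0 \<le> \<epsilon>" using eps norm_ge_zero[of \<alpha>] by linarith
  define G where "G = (\<lambda>\<omega>. min (6 * (cmod (X0 \<omega>))\<^sup>2) (\<bar>t\<bar> * \<epsilon> * (cmod (X0 \<omega>)) ^ 3))"
  have G0: "0 \<le> G \<omega>" for \<omega> unfolding G_def using e0 by simp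
  have Gint: "integrable M G"
  proof (rule Bochner_Integration.integrable_bound[OF integrable_mult_right[OF X_sq_int, of 6]])
    show "G \<in> borel_measurable M" unfolding G_def by measurable
    show "AE x in M. norm (G x) \<le> norm (6 * (cmod (X0 x))\<^sup>2)"
    proof (intro AE_I2)
      fix x
      have "norm (G x) = G x" using G0[of x] by simp
      also have "\<dots> \<le> 6 * (cmod (X0 x))\<^sup>2" unfolding G_def by simp
      finally show "norm (G x) \<le> norm (6 * (cmod (X0 x))\<^sup>2)" by simp
    qed
  qed
  have A: "cmod (char (distr M borel V) t - (1 - t\<^sup>2 * ((cmod \<alpha>)\<^sup>2 / 2) / 2)) \<le>
      (t\<^sup>2 / 6) * expectation (\<lambda>x. min (6 * (V x)\<^sup>2) (\<bar>t\<bar> * \<bar>V x\<bar> ^ 3))"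
    by (rule char_approx3'[OF _ V_int V2_int EV var refl]) simp
  have B: "expectation (\<lambda>x. min (6 * (V x)\<^sup>2) (\<bar>t\<bar> * \<bar>V x\<bar> ^ 3)) \<le>
      expectation (\<lambda>\<omega>. (cmod \<alpha>)\<^sup>2 * G \<omega>)"
  proof (rule integral_mono')
    show "integrable M (\<lambda>\<omega>. (cmod \<alpha>)\<^sup>2 * G \<omega>)"
      by (rule integrable_mult_right[OF Gint])
    fix \<omega> assume "\<omega> \<in> space M"
    have 1: "6 * (V \<omega>)\<^sup>2 \<le> (cmod \<alpha>)\<^sup>2 * (6 * (cmod (X0 \<omega>))\<^sup>2)"
      using hV2[of \<omega>] by simp
    have "\<bar>V \<omega>\<bar> ^ 3 \<le> (cmod \<alpha> * cmod (X0 \<omega>)) ^ 3" using hV0[of \<omega>] by (intro power_mono) simp_all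
    also have "\<dots> = (cmod \<alpha>)\<^sup>2 * (cmod \<alpha> * (cmod (X0 \<omega>)) ^ 3)"
      by (simp add: power_mult_distrib power3_eq_cube power2_eq_square)
    also have "\<dots> \<le> (cmod \<alpha>)\<^sup>2 * (\<epsilon> * (cmod (X0 \<omega>)) ^ 3)"
      using eps by (intro mult_left_mono mult_right_mono) simp_all
    finally have "\<bar>t\<bar> * \<bar>V \<omega>\<bar> ^ 3 \<le> \<bar>t\<bar> * ((cmod \<alpha>)\<^sup>2 * (\<epsilon> * (cmod (X0 \<omega>)) ^ 3))"
      by (intro mult_left_mono) simp_all
    then have 2: "\<bar>t\<bar> * \<bar>V \<omega>\<bar> ^ 3 \<le> (cmod \<alpha>)\<^sup>2 * (\<bar>t\<bar> * \<epsilon> * (cmod (X0 \<omega>)) ^ 3)"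
      by (simp add: ac_simps)
    have "min (6 * (V \<omega>)\<^sup>2) (\<bar>t\<bar> * \<bar>V \<omega>\<bar> ^ 3) \<le>
        min ((cmod \<alpha>)\<^sup>2 * (6 * (cmod (X0 \<omega>))\<^sup>2)) ((cmod \<alpha>)\<^sup>2 * (\<bar>t\<bar> * \<epsilon> * (cmod (X0 \<omega>)) ^ 3))"
      using 1 2 by (simp add: min_def)
    also have "\<dots> = (cmod \<alpha>)\<^sup>2 * G \<omega>"
      unfolding G_def by (rule mult_min_right[symmetric]) simp
    finally show "min (6 * (V \<omega>)\<^sup>2) (\<bar>t\<bar> * \<bar>V \<omega>\<bar> ^ 3) \<le> (cmod \<alpha>)\<^sup>2 * G \<omega>" .
    show "0 \<le> (cmod \<alpha>)\<^sup>2 * G \<omega>" using G0[of \<omega>] by simp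
  qed
  have C: "expectation (\<lambda>\<omega>. (cmod \<alpha>)\<^sup>2 * G \<omega>) = (cmod \<alpha>)\<^sup>2 * expectation G" by simp
  have D: "cmod (char (distr M borel V) t - (1 - t\<^sup>2 * ((cmod \<alpha>)\<^sup>2 / 2) / 2)) \<le>
      (cmod \<alpha>)\<^sup>2 * (t\<^sup>2 / 6 * expectation G)"
  proof -
    have "(t\<^sup>2 / 6) * expectation (\<lambda>x. min (6 * (V x)\<^sup>2) (\<bar>t\<bar> * \<bar>V x\<bar> ^ 3)) \<le>
        (t\<^sup>2 / 6) * ((cmod \<alpha>)\<^sup>2 * expectation G)"
      using B C by (intro mult_left_mono) simp_all
    then show ?thesis using A by (simp add: ac_simps)
  qed
  have E: "(1 - t\<^sup>2 * ((cmod \<alpha>)\<^sup>2 / 2) / 2 :: complex) = 1 - t\<^sup>2 * (cmod \<alpha>)\<^sup>2 / 4"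
    by simp
  show ?thesis using D unfolding E G_def V_def .
qed


lemma lborel_complex:
  "distr (lborel \<Otimes>\<^sub>M lborel) borel (\<lambda>(x, y). Complex x y) = (lborel :: complex measure)"
proof (rule lborel_eqI[symmetric])
  fix l u :: complex
  assume le: "\<And>b. b \<in> Basis \<Longrightarrow> l \<bullet> b \<le> u \<bullet> b"
  have le1: "Re l \<le> Re u" and le2: "Im l \<le> Im u"
    using le[of 1] le[of \<i>] by simp_all
  have [measurable]: "(\<lambda>(x, y). Complex x y) \<in> borel_measurable (lborel \<Otimes>\<^sub>M lborel)"
  proof -
    have "(\<lambda>(x, y). Complex x y) = (\<lambda>p. complex_of_real (fst p) + \<i> * complex_of_real (snd p))"
      by (auto simp: complex_eq_iff)
    then show ?thesis by simp
  qed
  have pre: "(\<lambda>(x, y). Complex x y) -` box l u \<inter> space (lborel \<Otimes>\<^sub>M lborel) =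
      {Re l<..<Re u} \<times> {Im l<..<Im u}"
    by (auto simp: box_def Basis_complex_def space_pair_measure)
  have "emeasure (distr (lborel \<Otimes>\<^sub>M lborel) borel (\<lambda>(x, y). Complex x y)) (box l u)
      = emeasure (lborel \<Otimes>\<^sub>M lborel) ({Re l<..<Re u} \<times> {Im l<..<Im u})"
    by (subst emeasure_distr) (simp_all add: pre)
  also have "\<dots> = ennreal (Re u - Re l) * ennreal (Im u - Im l)"
    by (simp add: lborel.emeasure_pair_measure_Times le1 le2)
  also have "\<dots> = ennreal (\<Prod>b\<in>Basis. (u - l) \<bullet> b)"
    by (simp add: Basis_complex_def ennreal_mult'[symmetric] le1 le2)
  finally show "emeasure (distr (lborel \<Otimes>\<^sub>M lborel) borel (\<lambda>(x, y). Complex x y)) (box l u) =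
      ennreal (\<Prod>b\<in>Basis. (u - l) \<bullet> b)" .
qed simp

definition nd :: "real \<Rightarrow> real" where "nd = normal_density 0 (sqrt (1/2))"

lemma nd_eq: "nd x = exp (- x\<^sup>2) / sqrt pi"
  unfolding nd_def normal_density_def by (simp add: field_simps)

lemma nd_nonneg[simp]: "0 \<le> nd x" unfolding nd_def by simp

lemma prob_D: "prob_space (density lborel nd)"
  unfolding nd_def by (rule prob_space_normal_density) simp

lemma nd_meas[measurable]: "nd \<in> borel_measurable borel"
  unfolding nd_eq[abs_def] by measurable

lemma char_D: "char (density lborel nd) u = complex_of_real (exp (- (u\<^sup>2 / 4)))"
proof -
  define S where "S = std_normal_distribution"
  interpret S: prob_space S unfolding S_def by (rule prob_space_normal_density) simp
  have "distributed S lborel (\<lambda>x. x) std_normal_density"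
    unfolding distributed_def S_def by (simp add: distr_id2)
  then have "distributed S lborel (\<lambda>x. 0 + sqrt (1/2) * x) (normal_density (0 + sqrt (1/2) * 0) (\<bar>sqrt (1/2)\<bar> * 1))"
    by (intro S.normal_density_affine) simp_all
  then have d: "distr S lborel (\<lambda>x. sqrt (1/2) * x) = density lborel nd"
    unfolding distributed_def nd_def by simp
  have "char (density lborel nd) u = char (distr S borel (\<lambda>x. sqrt (1/2) * x)) u"
    by (subst d[symmetric]) (intro arg_cong2[where f=char] distr_cong refl, simp_all)
  also have "\<dots> = (CLINT x|S. iexp (u * (sqrt (1/2) * x)))"
  proof -
    have sS[measurable_cong]: "sets S = sets borel" unfolding S_def by simp
    have m: "(\<lambda>x. sqrt (1/2) * x) \<in> borel_measurable S" by measurable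
    show ?thesis unfolding char_def by (subst integral_distr[OF m]) simp_all
  qed
  also have "\<dots> = char S (u * sqrt (1/2))"
    unfolding char_def by (simp add: ac_simps)
  also have "\<dots> = complex_of_real (exp (- ((u * sqrt (1/2))\<^sup>2) / 2))"
    unfolding S_def by (simp add: char_std_normal_distribution)
  also have "(u * sqrt (1/2))\<^sup>2 = u\<^sup>2 / 2" by (simp add: power_mult_distrib)
  finally show ?thesis by simp
qed

lemma gauss_pair:
  fixes Y :: "'b \<Rightarrow> complex"
  assumes Yd: "distributed N lborel Y (\<lambda>y. ennreal (exp (- (cmod y)\<^sup>2) / pi))"
  shows "distr N (borel \<Otimes>\<^sub>M borel) (\<lambda>\<omega>. (Re (Y \<omega>), Im (Y \<omega>))) =
         density lborel nd \<Otimes>\<^sub>M density lborel nd"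
proof -
  define g where "g = (\<lambda>y::complex. ennreal (exp (- (cmod y)\<^sup>2) / pi))"
  define C where "C = (\<lambda>(x, y). Complex x y)"
  define L where "L = (lborel \<Otimes>\<^sub>M lborel :: (real \<times> real) measure)"
  have Ym: "Y \<in> measurable N lborel" and Yd': "distr N lborel Y = density lborel g"
    using Yd unfolding distributed_def g_def by auto
  have gm[measurable]: "g \<in> borel_measurable borel" unfolding g_def by measurable
  have Cm[measurable]: "C \<in> measurable L borel"
  proof -
    have "C = (\<lambda>p. complex_of_real (fst p) + \<i> * complex_of_real (snd p))"
      by (auto simp: complex_eq_iff C_def)
    then show ?thesis unfolding L_def by simp
  qed
  have sL: "sets L = sets (borel \<Otimes>\<^sub>M borel)" unfolding L_def
    by (rule sets_pair_measure_cong) simp_all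
  have RIm: "(\<lambda>y. (Re y, Im y)) \<in> measurable borel (borel \<Otimes>\<^sub>M borel)" by measurable
  have "distr N (borel \<Otimes>\<^sub>M borel) (\<lambda>\<omega>. (Re (Y \<omega>), Im (Y \<omega>))) =
      distr (distr N lborel Y) (borel \<Otimes>\<^sub>M borel) (\<lambda>y. (Re y, Im y))"
    using Ym RIm by (subst distr_distr) (auto simp: comp_def)
  also have "\<dots> = distr (density lborel g) (borel \<Otimes>\<^sub>M borel) (\<lambda>y. (Re y, Im y))"
    by (simp add: Yd')
  also have "density (lborel :: complex measure) g = density (distr L borel C) g"
    unfolding L_def C_def by (simp only: lborel_complex)
  also have "\<dots> = distr (density L (\<lambda>p. g (C p))) borel C"
    by (rule density_distr) simp_all
  also have "distr (distr (density L (\<lambda>p. g (C p))) borel C) (borel \<Otimes>\<^sub>M borel) (\<lambda>y. (Re y, Im y))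
      = distr (density L (\<lambda>p. g (C p))) (borel \<Otimes>\<^sub>M borel) (\<lambda>p. p)"
  proof -
    have "distr (distr (density L (\<lambda>p. g (C p))) borel C) (borel \<Otimes>\<^sub>M borel) (\<lambda>y. (Re y, Im y))
        = distr (density L (\<lambda>p. g (C p))) (borel \<Otimes>\<^sub>M borel) ((\<lambda>y. (Re y, Im y)) \<circ> C)"
      by (rule distr_distr) (simp_all add: RIm)
    also have "\<dots> = distr (density L (\<lambda>p. g (C p))) (borel \<Otimes>\<^sub>M borel) (\<lambda>p. p)"
      by (rule distr_cong) (auto simp: C_def)
    finally show ?thesis .
  qed
  also have "\<dots> = density L (\<lambda>p. g (C p))"
    by (rule distr_id2) (simp add: sL)
  also have "\<dots> = density L (\<lambda>(x, y). ennreal (nd x) * ennreal (nd y))"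
  proof (rule density_cong)
    show "(\<lambda>p. g (C p)) \<in> borel_measurable L" by measurable
    show "(\<lambda>(x, y). ennreal (nd x) * ennreal (nd y)) \<in> borel_measurable L" unfolding L_def by measurable
    show "AE p in L. g (C p) = (\<lambda>(x, y). ennreal (nd x) * ennreal (nd y)) p"
    proof (rule AE_I2)
    fix p :: "real \<times> real"
    obtain x y where p: "p = (x, y)" by (cases p)
    have "exp (- (cmod (Complex x y))\<^sup>2) / pi = nd x * nd y"
      by (simp add: nd_eq cmod_power2 exp_add[symmetric] field_simps)
    then show "g (C p) = (\<lambda>(x, y). ennreal (nd x) * ennreal (nd y)) p"
      by (simp add: p g_def C_def ennreal_mult)
    qed
  qed
  also have "\<dots> = density lborel nd \<Otimes>\<^sub>M density lborel nd"
    unfolding L_def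
  proof (rule pair_measure_density[symmetric])
    show "sigma_finite_measure (density lborel (\<lambda>x. ennreal (nd x)))"
      using prob_D by (simp add: prob_space_imp_sigma_finite)
  qed (simp_all add: sigma_finite_lborel)
  finally show ?thesis .
qed

lemma D_fst: "distr (density lborel nd \<Otimes>\<^sub>M density lborel nd) borel fst = density lborel nd"
proof -
  interpret D: prob_space "density lborel nd" by (rule prob_D)
  have "distr (density lborel nd \<Otimes>\<^sub>M density lborel nd) borel fst =
      distr (density lborel nd \<Otimes>\<^sub>M density lborel nd) (density lborel nd) fst"
    by (rule distr_cong) simp_all
  also have "\<dots> = density lborel nd" by (rule D.distr_pair_fst)
  finally show ?thesis .
qed

lemma D_snd: "distr (density lborel nd \<Otimes>\<^sub>M density lborel nd) borel snd = density lborel nd"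
proof (intro measure_eqI)
  interpret D: prob_space "density lborel nd" by (rule prob_D)
  interpret DD: pair_prob_space "density lborel nd" "density lborel nd" ..
  fix A assume A: "A \<in> sets (distr (density lborel nd \<Otimes>\<^sub>M density lborel nd) borel snd)"
  then have A': "A \<in> sets borel" by simp
  have "emeasure (distr (density lborel nd \<Otimes>\<^sub>M density lborel nd) borel snd) A =
      emeasure (density lborel nd \<Otimes>\<^sub>M density lborel nd) (UNIV \<times> A)"
    using A' by (subst emeasure_distr) (auto simp: space_pair_measure intro!: arg_cong2[where f=emeasure])
  also have "\<dots> = emeasure (density lborel nd) UNIV * emeasure (density lborel nd) A"
    using A' by (intro D.emeasure_pair_measure_Times) simp_all
  also have "emeasure (density lborel nd) UNIV = 1"
    using D.emeasure_space_1 by simp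
  finally show "emeasure (distr (density lborel nd \<Otimes>\<^sub>M density lborel nd) borel snd) A =
      emeasure (density lborel nd) A" by simp
qed simp

lemma char_scaled:
  fixes X :: "'b \<Rightarrow> real"
  assumes N: "prob_space N" and Xm[measurable]: "X \<in> borel_measurable N"
    and d: "distr N borel X = density lborel nd"
  shows "char (distr N borel (\<lambda>\<omega>. a * X \<omega>)) t = complex_of_real (exp (- ((t * a)\<^sup>2 / 4)))"
proof -
  have "char (distr N borel (\<lambda>\<omega>. a * X \<omega>)) t = (CLINT \<omega>|N. iexp (t * (a * X \<omega>)))"
    unfolding char_def by (subst integral_distr) simp_all
  also have "\<dots> = (CLINT x|distr N borel X. iexp ((t * a) * x))"
    by (subst integral_distr) (simp_all add: ac_simps)
  also have "\<dots> = char (density lborel nd) (t * a)" unfolding char_def d ..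
  finally show ?thesis by (simp add: char_D)
qed

lemma D_abs_int: "integrable (density lborel nd) (\<lambda>x. \<bar>x\<bar>)"
proof (subst integrable_density)
  show "integrable lborel (\<lambda>x. nd x *\<^sub>R \<bar>x\<bar>)"
    using integrable_normal_moment_abs[of "sqrt (1/2)" 0 1] unfolding nd_def by simp
qed simp_all

lemma gauss_facts:
  fixes Y :: "'b \<Rightarrow> complex"
  assumes N: "prob_space N"
    and Yd: "distributed N lborel Y (\<lambda>y. ennreal (exp (- (cmod y)\<^sup>2) / pi))"
  shows "char (distr N borel (\<lambda>\<omega>. Re (c * Y \<omega>))) t = complex_of_real (exp (- (t\<^sup>2 * (cmod c)\<^sup>2 / 4)))"
    and "integrable N (\<lambda>\<omega>. cmod (Y \<omega>))"
proof -
  interpret prob_space N by (rule N)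
  have Ym0: "Y \<in> measurable N lborel" using Yd unfolding distributed_def by auto
  then have Ym[measurable]: "Y \<in> borel_measurable N" by simp
  define D where "D = density lborel nd"
  have hP: "distr N (borel \<Otimes>\<^sub>M borel) (\<lambda>\<omega>. (Re (Y \<omega>), Im (Y \<omega>))) = D \<Otimes>\<^sub>M D"
    unfolding D_def by (rule gauss_pair[OF Yd])
  have Pm: "(\<lambda>\<omega>. (Re (Y \<omega>), Im (Y \<omega>))) \<in> measurable N (borel \<Otimes>\<^sub>M borel)" by measurable
  have hRe: "distr N borel (\<lambda>\<omega>. Re (Y \<omega>)) = D"
  proof -
    have "distr N borel (\<lambda>\<omega>. Re (Y \<omega>)) = distr (distr N (borel \<Otimes>\<^sub>M borel) (\<lambda>\<omega>. (Re (Y \<omega>), Im (Y \<omega>)))) borel fst"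
      using Pm by (subst distr_distr) (simp_all add: comp_def)
    also have "\<dots> = D" unfolding hP D_def by (rule D_fst)
    finally show ?thesis .
  qed
  have hIm: "distr N borel (\<lambda>\<omega>. Im (Y \<omega>)) = D"
  proof -
    have "distr N borel (\<lambda>\<omega>. Im (Y \<omega>)) = distr (distr N (borel \<Otimes>\<^sub>M borel) (\<lambda>\<omega>. (Re (Y \<omega>), Im (Y \<omega>)))) borel snd"
      using Pm by (subst distr_distr) (simp_all add: comp_def)
    also have "\<dots> = D" unfolding hP D_def by (rule D_snd)
    finally show ?thesis .
  qed
  have ind: "indep_var borel (\<lambda>\<omega>. Re (Y \<omega>)) borel (\<lambda>\<omega>. Im (Y \<omega>))"
    by (subst indep_var_distribution_eq) (simp add: hRe hIm hP)
  have ind2: "indep_var borel (\<lambda>\<omega>. Re c * Re (Y \<omega>)) borel (\<lambda>\<omega>. (- Im c) * Im (Y \<omega>))"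
    using indep_var_compose[OF ind, of "\<lambda>x. Re c * x" borel "\<lambda>x. (- Im c) * x" borel]
    by (simp add: comp_def)
  have "char (distr N borel (\<lambda>\<omega>. Re (c * Y \<omega>))) t =
      char (distr N borel (\<lambda>\<omega>. Re c * Re (Y \<omega>) + (- Im c) * Im (Y \<omega>))) t"
    by simp
  also have "\<dots> = char (distr N borel (\<lambda>\<omega>. Re c * Re (Y \<omega>))) t * char (distr N borel (\<lambda>\<omega>. (- Im c) * Im (Y \<omega>))) t"
    by (rule char_distr_add[OF ind2])
  also have "\<dots> = complex_of_real (exp (- ((t * Re c)\<^sup>2 / 4))) * complex_of_real (exp (- ((t * (- Im c))\<^sup>2 / 4)))"
    using char_scaled[OF N _ hRe[unfolded D_def], of "Re c" t] char_scaled[OF N _ hIm[unfolded D_def], of "- Im c" t]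
    by simp
  also have "\<dots> = complex_of_real (exp (- (t\<^sup>2 * (cmod c)\<^sup>2 / 4)))"
    apply (subst of_real_mult[symmetric])
    apply (subst exp_add[symmetric])
    apply (simp add: cmod_power2 power_mult_distrib algebra_simps add_divide_distrib)
    done
  finally show "char (distr N borel (\<lambda>\<omega>. Re (c * Y \<omega>))) t = complex_of_real (exp (- (t\<^sup>2 * (cmod c)\<^sup>2 / 4)))" .
  have iRe: "integrable N (\<lambda>\<omega>. \<bar>Re (Y \<omega>)\<bar>)"
    using D_abs_int unfolding D_def[symmetric] hRe[symmetric] by (subst (asm) integrable_distr_eq) simp_all
  have iIm: "integrable N (\<lambda>\<omega>. \<bar>Im (Y \<omega>)\<bar>)"
    using D_abs_int unfolding D_def[symmetric] hIm[symmetric] by (subst (asm) integrable_distr_eq) simp_all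
  show "integrable N (\<lambda>\<omega>. cmod (Y \<omega>))"
    by (rule Bochner_Integration.integrable_bound[OF Bochner_Integration.integrable_add[OF iRe iIm]])
       (auto intro!: AE_I2 cmod_le)
qed


lemma exp_approx_bound:
  fixes c :: real assumes "0 \<le> c" "c \<le> 1"
  shows "\<bar>(1 - c) - exp (- c)\<bar> \<le> c\<^sup>2"
proof -
  have l: "1 - c \<le> exp (- c)" using exp_ge_add_one_self[of "- c"] by simp
  have "exp c \<ge> 1 + c" by (rule exp_ge_add_one_self)
  then have "exp (- c) \<le> 1 / (1 + c)" using assms by (simp add: exp_minus field_simps)
  also have "1 / (1 + c) \<le> 1 - c + c\<^sup>2"
  proof -
    have "1 \<le> (1 + c) * (1 - c + c\<^sup>2)" using assms by (simp add: algebra_simps power2_eq_square power3_eq_cube)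
    then show ?thesis using assms by (simp add: field_simps)
  qed
  finally show ?thesis using l by simp
qed

lemma core_bound:
  fixes X0 :: "'a \<Rightarrow> complex" and \<alpha> :: "nat \<Rightarrow> complex" and t \<epsilon> A :: real and \<psi> :: complex
  assumes M: "prob_space M" and meas[measurable]: "X0 \<in> borel_measurable M"
    and X_sq_int: "integrable M (\<lambda>\<omega>. (cmod (X0 \<omega>))\<^sup>2)"
    and X_mean: "prob_space.expectation M X0 = 0"
    and X_var: "prob_space.expectation M (\<lambda>\<omega>. (cmod (X0 \<omega>))\<^sup>2) = 1"
    and X_ReIm: "prob_space.expectation M (\<lambda>\<omega>. (Re (X0 \<omega>))\<^sup>2)
                 = prob_space.expectation M (\<lambda>\<omega>. (Im (X0 \<omega>))\<^sup>2)"
    and X_cov: "prob_space.expectation M (\<lambda>\<omega>. Re (X0 \<omega>) * Im (X0 \<omega>)) = 0"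
    and eps: "\<And>k. cmod (\<alpha> k) \<le> \<epsilon>" and small: "t\<^sup>2 * \<epsilon>\<^sup>2 / 4 \<le> 1"
    and A: "(\<lambda>k. (cmod (\<alpha> k))\<^sup>2) sums A"
    and lim: "(\<lambda>N. \<Prod>k<N. char (distr M borel (\<lambda>\<omega>. Re (\<alpha> k * X0 \<omega>))) t) \<longlonglongrightarrow> \<psi>"
  shows "cmod (\<psi> - complex_of_real (exp (- (t\<^sup>2 * A / 4)))) \<le>
     A * (t\<^sup>2 / 6 * prob_space.expectation M (\<lambda>\<omega>. min (6 * (cmod (X0 \<omega>))\<^sup>2) (\<bar>t\<bar> * \<epsilon> * (cmod (X0 \<omega>)) ^ 3)))
     + t\<^sup>2 * \<epsilon>\<^sup>2 / 4 * (t\<^sup>2 * A / 4)"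
proof -
  interpret prob_space M by (rule M)
  define G where "G = expectation (\<lambda>\<omega>. min (6 * (cmod (X0 \<omega>))\<^sup>2) (\<bar>t\<bar> * \<epsilon> * (cmod (X0 \<omega>)) ^ 3))"
  define \<phi> where "\<phi> k = char (distr M borel (\<lambda>\<omega>. Re (\<alpha> k * X0 \<omega>))) t" for k
  define c where "c k = t\<^sup>2 * (cmod (\<alpha> k))\<^sup>2 / 4" for k
  have e0: "0 \<le> \<epsilon>" using eps[of 0] norm_ge_zero[of "\<alpha> 0"] by linarith
  have G0: "0 \<le> G" unfolding G_def using e0 by (intro integral_nonneg_AE AE_I2) simp
  have c0: "0 \<le> c k" for k unfolding c_def by simp
  have ceps: "c k \<le> t\<^sup>2 * \<epsilon>\<^sup>2 / 4" for k
    unfolding c_def using eps[of k] by (intro divide_right_mono mult_left_mono power_mono) simp_all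
  have c1: "c k \<le> 1" for k using ceps[of k] small by linarith
  have fb: "cmod (\<phi> k - (1 - c k)) \<le> (cmod (\<alpha> k))\<^sup>2 * (t\<^sup>2 / 6 * G)" for k
    unfolding \<phi>_def c_def G_def
    using char_factor_bound[OF M meas X_sq_int X_mean X_var X_ReIm X_cov eps[of k], of t] by simp
  have phi1: "cmod (\<phi> k) \<le> 1" for k
  proof -
    have "real_distribution (distr M borel (\<lambda>\<omega>. Re (\<alpha> k * X0 \<omega>)))"
      by (rule real_distribution_distr) simp
    then show ?thesis unfolding \<phi>_def by (rule real_distribution.cmod_char_le_1)
  qed
  have As: "summable (\<lambda>k. (cmod (\<alpha> k))\<^sup>2)" and Aeq: "A = (\<Sum>k. (cmod (\<alpha> k))\<^sup>2)"
    using A by (auto simp: sums_iff)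
  have psum: "(\<Sum>k<N. (cmod (\<alpha> k))\<^sup>2) \<le> A" for N
    unfolding Aeq by (rule sum_le_suminf[OF As]) simp_all
  have csum: "(\<Sum>k<N. c k) \<le> t\<^sup>2 * A / 4" for N
  proof -
    have "(\<Sum>k<N. c k) = t\<^sup>2 / 4 * (\<Sum>k<N. (cmod (\<alpha> k))\<^sup>2)"
      unfolding c_def by (simp add: sum_distrib_left sum_divide_distrib)
    also have "\<dots> \<le> t\<^sup>2 / 4 * A" by (intro mult_left_mono psum) simp
    finally show ?thesis by simp
  qed
  have csums: "(\<lambda>N. \<Sum>k<N. c k) \<longlonglongrightarrow> t\<^sup>2 * A / 4"
  proof -
    have "(\<lambda>k. t\<^sup>2 / 4 * (cmod (\<alpha> k))\<^sup>2) sums (t\<^sup>2 / 4 * A)" by (rule sums_mult[OF A])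
    then show ?thesis unfolding c_def sums_def by (simp add: ac_simps)
  qed
  define P where "P N = (\<Prod>k<N. \<phi> k)" for N
  define E where "E N = complex_of_real (exp (- (\<Sum>k<N. c k)))" for N
  define B where "B = A * (t\<^sup>2 / 6 * G) + t\<^sup>2 * \<epsilon>\<^sup>2 / 4 * (t\<^sup>2 * A / 4)"
  have PE: "cmod (P N - E N) \<le> B" for N
  proof -
    have E_eq: "E N = (\<Prod>k<N. complex_of_real (exp (- c k)))"
    proof -
      have "(\<Prod>k<N. complex_of_real (exp (- c k))) = complex_of_real (exp (\<Sum>k<N. - c k))"
        by (simp add: exp_sum)
      then show ?thesis unfolding E_def by (simp add: sum_negf)
    qed
    have n1: "cmod (1 - complex_of_real (c k)) \<le> 1" for k
    proof -
      have "cmod (1 - complex_of_real (c k)) = \<bar>1 - c k\<bar>" by (metis norm_of_real of_real_1 of_real_diff)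
      then show ?thesis using c0[of k] c1[of k] by simp
    qed
    have 1: "cmod (P N - (\<Prod>k<N. complex_of_real (1 - c k))) \<le> (\<Sum>k<N. cmod (\<phi> k - complex_of_real (1 - c k)))"
      unfolding P_def by (rule norm_prod_diff) (use phi1 n1 in auto)
    have 2: "cmod ((\<Prod>k<N. complex_of_real (1 - c k)) - E N) \<le>
        (\<Sum>k<N. cmod (complex_of_real (1 - c k) - complex_of_real (exp (- c k))))"
      unfolding E_eq by (rule norm_prod_diff) (use n1 c0 in auto)
    have "(\<Sum>k<N. cmod (\<phi> k - complex_of_real (1 - c k))) \<le> (\<Sum>k<N. (cmod (\<alpha> k))\<^sup>2 * (t\<^sup>2 / 6 * G))"
      by (intro sum_mono) (use fb in simp)
    also have "\<dots> = (\<Sum>k<N. (cmod (\<alpha> k))\<^sup>2) * (t\<^sup>2 / 6 * G)" by (simp add: sum_distrib_right)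
    also have "\<dots> \<le> A * (t\<^sup>2 / 6 * G)" using G0 by (intro mult_right_mono psum) simp
    finally have 3: "(\<Sum>k<N. cmod (\<phi> k - complex_of_real (1 - c k))) \<le> A * (t\<^sup>2 / 6 * G)" .
    have "(\<Sum>k<N. cmod (complex_of_real (1 - c k) - complex_of_real (exp (- c k)))) \<le> (\<Sum>k<N. (c k)\<^sup>2)"
    proof (intro sum_mono)
      fix k
      have "cmod (complex_of_real (1 - c k) - complex_of_real (exp (- c k))) = \<bar>(1 - c k) - exp (- c k)\<bar>"
        by (simp only: of_real_diff[symmetric] norm_of_real)
      also have "\<dots> \<le> (c k)\<^sup>2" by (rule exp_approx_bound[OF c0 c1])
      finally show "cmod (complex_of_real (1 - c k) - complex_of_real (exp (- c k))) \<le> (c k)\<^sup>2" .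
    qed
    also have "\<dots> \<le> (\<Sum>k<N. t\<^sup>2 * \<epsilon>\<^sup>2 / 4 * c k)"
    proof (intro sum_mono)
      fix k
      have "c k * c k \<le> t\<^sup>2 * \<epsilon>\<^sup>2 / 4 * c k" by (rule mult_right_mono[OF ceps c0])
      then show "(c k)\<^sup>2 \<le> t\<^sup>2 * \<epsilon>\<^sup>2 / 4 * c k" by (simp add: power2_eq_square)
    qed
    also have "\<dots> = t\<^sup>2 * \<epsilon>\<^sup>2 / 4 * (\<Sum>k<N. c k)" by (simp add: sum_distrib_left)
    also have "\<dots> \<le> t\<^sup>2 * \<epsilon>\<^sup>2 / 4 * (t\<^sup>2 * A / 4)" by (intro mult_left_mono csum) simp
    finally have 4: "(\<Sum>k<N. cmod (complex_of_real (1 - c k) - complex_of_real (exp (- c k)))) \<le>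
        t\<^sup>2 * \<epsilon>\<^sup>2 / 4 * (t\<^sup>2 * A / 4)" .
    have "cmod (P N - E N) \<le> cmod (P N - (\<Prod>k<N. complex_of_real (1 - c k))) +
        cmod ((\<Prod>k<N. complex_of_real (1 - c k)) - E N)"
      using norm_triangle_ineq[of "P N - (\<Prod>k<N. complex_of_real (1 - c k))" "(\<Prod>k<N. complex_of_real (1 - c k)) - E N"]
      by simp
    then show ?thesis unfolding B_def using 1 2 3 4 by linarith
  qed
  have "(\<lambda>N. cmod (P N - E N)) \<longlonglongrightarrow> cmod (\<psi> - complex_of_real (exp (- (t\<^sup>2 * A / 4))))"
    unfolding P_def E_def using lim csums unfolding \<phi>_def
    by (intro tendsto_intros) auto
  then have "cmod (\<psi> - complex_of_real (exp (- (t\<^sup>2 * A / 4)))) \<le> B"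
    by (rule LIMSEQ_le_const2) (use PE in auto)
  then show ?thesis unfolding B_def G_def .
qed


lemma one_minus_ne:
  assumes "cmod u < 1" "cmod z < 1" shows "1 - cnj u * z \<noteq> 0"
proof
  assume "1 - cnj u * z = 0"
  then have "cnj u * z = 1" by simp
  then have "cmod u * cmod z = 1" by (metis complex_mod_cnj norm_mult norm_one)
  moreover have "cmod u * cmod z < 1"
    using assms by (metis le_less_trans less_eq_real_def mult_left_le norm_ge_zero)
  ultimately show False by simp
qed

lemma mob:
  assumes u: "cmod u < 1" and z: "cmod z < 1" and w: "cmod w < 1"
  shows "1 - Phi u z * cnj (Phi u w) =
    (1 - complex_of_real ((cmod u)\<^sup>2)) * (1 - z * cnj w) / ((1 - cnj u * z) * cnj (1 - cnj u * w))"
proof -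
  have n1: "1 - cnj u * z \<noteq> 0" by (rule one_minus_ne[OF u z])
  have n2': "1 - u * cnj w \<noteq> 0"
  proof
    assume "1 - u * cnj w = 0"
    then have "cnj (1 - u * cnj w) = 0" by simp
    then show False using one_minus_ne[OF u w] by simp
  qed
  have uu: "complex_of_real ((cmod u)\<^sup>2) = u * cnj u" by (rule complex_norm_square)
  have aux: "1 - (a / p) * (b / q) = (p * q - a * b) / (p * q)" if "p \<noteq> 0" "q \<noteq> 0" for a b p q :: complex
    using that by (simp add: field_simps)
  have cP: "cnj (Phi u w) = (cnj w - cnj u) / (1 - u * cnj w)" by (simp add: Phi_def)
  have "1 - Phi u z * cnj (Phi u w) = 1 - ((z - u) / (1 - cnj u * z)) * ((cnj w - cnj u) / (1 - u * cnj w))"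
    unfolding cP by (simp add: Phi_def)
  also have "\<dots> = ((1 - cnj u * z) * (1 - u * cnj w) - (z - u) * (cnj w - cnj u)) / ((1 - cnj u * z) * (1 - u * cnj w))"
    by (rule aux[OF n1 n2'])
  also have "(1 - cnj u * z) * (1 - u * cnj w) - (z - u) * (cnj w - cnj u) = (1 - u * cnj u) * (1 - z * cnj w)"
    by (simp add: algebra_simps)
  finally show ?thesis unfolding uu by simp
qed

lemma Delta_cnj_prod:
  assumes u: "cmod u < 1"
  shows "Delta u z * cnj (Delta u w) = (1 - cnj u * z) * cnj (1 - cnj u * w) / (1 - complex_of_real ((cmod u)\<^sup>2))"
proof -
  have pos: "0 < 1 - (cmod u)\<^sup>2" using u by (simp add: abs_square_less_1)
  define s where "s = complex_of_real (sqrt (1 - (cmod u)\<^sup>2))"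
  have "Delta u z * cnj (Delta u w) = (1 - cnj u * z) / s * (cnj (1 - cnj u * w) / s)"
    unfolding Delta_def s_def by (simp only: complex_cnj_divide complex_cnj_complex_of_real)
  also have "\<dots> = (1 - cnj u * z) * cnj (1 - cnj u * w) / (s * s)" by simp
  also have "s * s = 1 - complex_of_real ((cmod u)\<^sup>2)"
    unfolding s_def using pos by (simp only: of_real_mult[symmetric] real_sqrt_mult_self abs_of_pos[OF pos] of_real_diff of_real_1)
  finally show ?thesis .
qed

lemma DP_identity:
  assumes u: "cmod u < 1" and z: "cmod z < 1" and w: "cmod w < 1"
  shows "Delta u z * cnj (Delta u w) * (1 - Phi u z * cnj (Phi u w)) = 1 - z * cnj w"
proof -
  have pos: "0 < 1 - (cmod u)\<^sup>2" using u by (simp add: abs_square_less_1)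
  have n0: "1 - complex_of_real ((cmod u)\<^sup>2) \<noteq> 0"
  proof
    assume "1 - complex_of_real ((cmod u)\<^sup>2) = 0"
    then have "complex_of_real (1 - (cmod u)\<^sup>2) = 0" by (simp only: of_real_diff of_real_1)
    then have "1 - (cmod u)\<^sup>2 = 0" by (simp only: of_real_eq_0_iff)
    then show False using pos by linarith
  qed
  have n1: "1 - cnj u * z \<noteq> 0" by (rule one_minus_ne[OF u z])
  have n2: "cnj (1 - cnj u * w) \<noteq> 0" using one_minus_ne[OF u w] by (metis complex_cnj_zero_iff)
  have g: "(P / K) * (K * T / P) = T" if "P \<noteq> 0" "K \<noteq> 0" for P K T :: complex
    using that by simp
  show ?thesis
    unfolding Delta_cnj_prod[OF u] mob[OF u z w] by (rule g) (use n0 n1 n2 in simp_all)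
qed

lemma Phi_lt1:
  assumes u: "cmod u < 1" and z: "cmod z < 1"
  shows "cmod (Phi u z) < 1"
proof -
  have pos: "0 < 1 - (cmod u)\<^sup>2" using u by (simp add: abs_square_less_1)
  have posz: "0 < 1 - (cmod z)\<^sup>2" using z by (simp add: abs_square_less_1)
  have n1: "1 - cnj u * z \<noteq> 0" by (rule one_minus_ne[OF u z])
  define p where "p = 1 - cnj u * z"
  have "complex_of_real (1 - (cmod (Phi u z))\<^sup>2) = 1 - Phi u z * cnj (Phi u z)"
    by (simp only: of_real_diff of_real_1 complex_norm_square)
  also have "\<dots> = (1 - complex_of_real ((cmod u)\<^sup>2)) * (1 - z * cnj z) / (p * cnj p)"
    unfolding p_def by (rule mob[OF u z z])
  also have "\<dots> = complex_of_real ((1 - (cmod u)\<^sup>2) * (1 - (cmod z)\<^sup>2) / (cmod p)\<^sup>2)"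
    by (simp only: complex_norm_square[symmetric] of_real_diff of_real_1 of_real_mult of_real_divide)
  finally have "1 - (cmod (Phi u z))\<^sup>2 = (1 - (cmod u)\<^sup>2) * (1 - (cmod z)\<^sup>2) / (cmod p)\<^sup>2"
    using of_real_eq_iff by blast
  moreover have "0 < (1 - (cmod u)\<^sup>2) * (1 - (cmod z)\<^sup>2) / (cmod p)\<^sup>2"
    using pos posz n1 unfolding p_def by simp
  ultimately have "(cmod (Phi u z))\<^sup>2 < 1" by linarith
  then show ?thesis by (simp add: abs_square_less_1)
qed

lemma key_eq:
  assumes u: "cmod u < 1" and z: "cmod z < 1" and w: "cmod w < 1"
  shows "(a / Delta u z) * cnj (b / Delta u w) / (1 - Phi u z * cnj (Phi u w)) = a * cnj b / (1 - z * cnj w)"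
proof -
  have "(a / Delta u z) * cnj (b / Delta u w) / (1 - Phi u z * cnj (Phi u w)) =
      a * cnj b / (Delta u z * cnj (Delta u w) * (1 - Phi u z * cnj (Phi u w)))"
    by (simp add: field_simps)
  then show ?thesis unfolding DP_identity[OF u z w] .
qed

lemma Delta_inv_bound:
  assumes u: "cmod u < 1" and z: "cmod z < 1"
  shows "cmod (a / Delta u z) \<le> cmod a * sqrt (1 - (cmod u)\<^sup>2) / (1 - cmod z)"
proof -
  have pos: "0 < 1 - (cmod u)\<^sup>2" using u by (simp add: abs_square_less_1)
  have n1: "1 - cnj u * z \<noteq> 0" by (rule one_minus_ne[OF u z])
  have lb: "1 - cmod z \<le> cmod (1 - cnj u * z)"
  proof -
    have "cmod (cnj u * z) \<le> cmod z" using u by (simp add: norm_mult mult_left_le_one_le)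
    moreover have "1 - cmod (cnj u * z) \<le> cmod (1 - cnj u * z)" using norm_triangle_ineq2[of 1 "cnj u * z"] by simp
    ultimately show ?thesis by linarith
  qed
  have "cmod (a / Delta u z) = cmod a * sqrt (1 - (cmod u)\<^sup>2) / cmod (1 - cnj u * z)"
    unfolding Delta_def using pos by (simp add: norm_divide norm_mult)
  also have "\<dots> \<le> cmod a * sqrt (1 - (cmod u)\<^sup>2) / (1 - cmod z)"
  proof (rule divide_left_mono[OF lb])
    show "0 \<le> cmod a * sqrt (1 - (cmod u)\<^sup>2)" using pos by simp
    show "0 < cmod (1 - cnj u * z) * (1 - cmod z)" using z lb n1 by (intro mult_pos_pos) simp_all
  qed
  finally show ?thesis .
qed


theorem lemma3:
  fixes M :: "'a measure" and N :: "'b measure"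
    and X :: "nat \<Rightarrow> 'a \<Rightarrow> complex" and Y :: "nat \<Rightarrow> 'b \<Rightarrow> complex"
  assumes M: "prob_space M" and N: "prob_space N"
    and X_meas: "\<And>k. X k \<in> borel_measurable M"
    and X_indep: "prob_space.indep_vars M (\<lambda>_. borel) X UNIV"
    and X_ident: "\<And>k. distr M borel (X k) = distr M borel (X 0)"
    and X_sq_int: "integrable M (\<lambda>\<omega>. (cmod (X 0 \<omega>))\<^sup>2)"
    and X_mean: "prob_space.expectation M (X 0) = 0"
    and X_var: "prob_space.expectation M (\<lambda>\<omega>. (cmod (X 0 \<omega>))\<^sup>2) = 1"
    and X_ReIm: "prob_space.expectation M (\<lambda>\<omega>. (Re (X 0 \<omega>))\<^sup>2)
                 = prob_space.expectation M (\<lambda>\<omega>. (Im (X 0 \<omega>))\<^sup>2)"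
    and X_cov: "prob_space.expectation M (\<lambda>\<omega>. Re (X 0 \<omega>) * Im (X 0 \<omega>)) = 0"
    and Y_indep: "prob_space.indep_vars N (\<lambda>_. borel) Y UNIV"
    and Y_gauss: "\<And>k. distributed N lborel (Y k) (\<lambda>y. ennreal (exp (- (cmod y)\<^sup>2) / pi))"
  shows "\<forall>(n::nat) (z::nat \<Rightarrow> complex) (lam::nat \<Rightarrow> complex).
           (\<forall>i<n. cmod (z i) < 1) \<longrightarrow>
           (\<forall>u::nat \<Rightarrow> complex. (\<forall>m. cmod (u m) < 1) \<longrightarrow> (\<lambda>m. cmod (u m)) \<longlonglongrightarrow> 1 \<longrightarrow>
              weak_conv_m
                (\<lambda>m. distr M borel (\<lambda>\<omega>. Re (\<Sum>i<n. lam i *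
                        rps (\<lambda>k. X k \<omega>) (Phi (u m) (z i)) / Delta (u m) (z i))))
                (distr N borel (\<lambda>\<omega>. Re (\<Sum>i<n. lam i * rps (\<lambda>k. Y k \<omega>) (z i)))))"
proof (intro allI impI)
  fix n :: nat and z lam :: "nat \<Rightarrow> complex" and u :: "nat \<Rightarrow> complex"
  assume hz: "\<forall>i<n. cmod (z i) < 1" and hu: "\<forall>m. cmod (u m) < 1" and hlim: "(\<lambda>m. cmod (u m)) \<longlonglongrightarrow> 1"
  interpret MP: prob_space M by (rule M)
  interpret NP: prob_space N by (rule N)
  have Xm[measurable]: "X k \<in> borel_measurable M" for k by (rule X_meas)
  have Ym[measurable]: "Y k \<in> borel_measurable N" for k
  proof -
    have "Y k \<in> measurable N lborel" using Y_gauss[of k] unfolding distributed_def by auto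
    then show ?thesis by simp
  qed
  have Y_ident: "distr N borel (Y k) = distr N borel (Y 0)" for k
  proof -
    have e: "distr N borel (Y j) = distr N lborel (Y j)" for j by (rule distr_cong) simp_all
    show ?thesis unfolding e using Y_gauss[of k] Y_gauss[of 0] unfolding distributed_def by simp
  qed
  have Y_int: "integrable N (\<lambda>\<omega>. cmod (Y 0 \<omega>))" by (rule gauss_facts(2)[OF N Y_gauss])
  have X_int: "integrable M (\<lambda>\<omega>. cmod (X 0 \<omega>))"
    by (rule MP.square_integrable_imp_integrable) (simp_all add: X_sq_int)
  define K where "K = Re (\<Sum>i<n. \<Sum>j<n. lam i * cnj (lam j) / (1 - z i * cnj (z j)))"
  define Rf where "Rf = (\<lambda>\<omega>. Re (\<Sum>i<n. lam i * rps (\<lambda>k. Y k \<omega>) (z i)))"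
  define \<beta> where "\<beta> k = (\<Sum>i<n. lam i * z i ^ k)" for k
  have hz': "\<And>i. i < n \<Longrightarrow> cmod (z i) < 1" using hz by auto
  have Hb: "(\<lambda>k. (cmod (\<beta> k))\<^sup>2) sums K" unfolding \<beta>_def K_def by (rule sq_sums[OF hz'])
  have Rfm: "Rf \<in> borel_measurable N"
    unfolding Rf_def by (rule char_limit(1)[OF N Ym Y_indep Y_ident Y_int hz'])
  have charR: "char (distr N borel Rf) t = complex_of_real (exp (- (t\<^sup>2 * K / 4)))" for t
  proof -
    have l1: "(\<lambda>N'. \<Prod>k<N'. char (distr N borel (\<lambda>\<omega>. Re (\<beta> k * Y 0 \<omega>))) t) \<longlonglongrightarrow> char (distr N borel Rf) t"
      unfolding Rf_def \<beta>_def by (rule char_limit(2)[OF N Ym Y_indep Y_ident Y_int hz'])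
    have eqN: "(\<Prod>k<N'. char (distr N borel (\<lambda>\<omega>. Re (\<beta> k * Y 0 \<omega>))) t) =
        complex_of_real (exp (- (\<Sum>k<N'. t\<^sup>2 * (cmod (\<beta> k))\<^sup>2 / 4)))" for N'
    proof -
      have "(\<Prod>k<N'. char (distr N borel (\<lambda>\<omega>. Re (\<beta> k * Y 0 \<omega>))) t) =
          (\<Prod>k<N'. complex_of_real (exp (- (t\<^sup>2 * (cmod (\<beta> k))\<^sup>2 / 4))))"
        by (intro prod.cong refl gauss_facts(1)[OF N Y_gauss])
      also have "\<dots> = complex_of_real (exp (\<Sum>k<N'. - (t\<^sup>2 * (cmod (\<beta> k))\<^sup>2 / 4)))"
        by (simp add: exp_sum)
      finally show ?thesis by (simp add: sum_negf)
    qed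
    have "(\<lambda>N'. \<Sum>k<N'. t\<^sup>2 * (cmod (\<beta> k))\<^sup>2 / 4) \<longlonglongrightarrow> t\<^sup>2 * K / 4"
    proof -
      have "(\<lambda>k. t\<^sup>2 / 4 * (cmod (\<beta> k))\<^sup>2) sums (t\<^sup>2 / 4 * K)" by (rule sums_mult[OF Hb])
      then show ?thesis unfolding sums_def by (simp add: ac_simps)
    qed
    then have l2: "(\<lambda>N'. \<Prod>k<N'. char (distr N borel (\<lambda>\<omega>. Re (\<beta> k * Y 0 \<omega>))) t) \<longlonglongrightarrow>
        complex_of_real (exp (- (t\<^sup>2 * K / 4)))"
      unfolding eqN by (intro tendsto_intros)
    show ?thesis using LIMSEQ_unique[OF l1 l2] .
  qed
  define a where "a m i = Phi (u m) (z i)" for m i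
  define e where "e m i = lam i / Delta (u m) (z i)" for m i
  define Lf where "Lf m = (\<lambda>\<omega>. Re (\<Sum>i<n. e m i * rps (\<lambda>k. X k \<omega>) (a m i)))" for m
  have Lf_eq: "(\<lambda>\<omega>. Re (\<Sum>i<n. lam i * rps (\<lambda>k. X k \<omega>) (Phi (u m) (z i)) / Delta (u m) (z i))) = Lf m" for m
    unfolding Lf_def a_def e_def by (intro ext arg_cong[where f=Re] sum.cong refl) simp
  have hu': "cmod (u m) < 1" for m using hu by auto
  have ha: "\<And>i. i < n \<Longrightarrow> cmod (a m i) < 1" for m unfolding a_def using Phi_lt1 hu' hz' by blast
  have Lfm: "Lf m \<in> borel_measurable M" for m
    unfolding Lf_def by (rule char_limit(1)[OF M Xm X_indep X_ident X_int ha])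
  define \<alpha> where "\<alpha> m k = (\<Sum>i<n. e m i * a m i ^ k)" for m k
  define \<epsilon> where "\<epsilon> m = (\<Sum>i<n. cmod (e m i))" for m
  have alpha_le: "cmod (\<alpha> m k) \<le> \<epsilon> m" for m k
  proof -
    have "cmod (\<alpha> m k) \<le> (\<Sum>i<n. cmod (e m i * a m i ^ k))" unfolding \<alpha>_def by (rule norm_sum)
    also have "\<dots> \<le> \<epsilon> m" unfolding \<epsilon>_def
    proof (intro sum_mono)
      fix i assume "i \<in> {..<n}"
      then have "cmod (a m i) ^ k \<le> 1" using ha[of i m] by (intro power_le_one) simp_all
      then show "cmod (e m i * a m i ^ k) \<le> cmod (e m i)"
        by (simp add: norm_mult norm_power mult_left_le)
    qed
    finally show ?thesis .
  qed
  have eps0: "0 \<le> \<epsilon> m" for m unfolding \<epsilon>_def by (simp add: sum_nonneg)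
  have Ha: "(\<lambda>k. (cmod (\<alpha> m k))\<^sup>2) sums K" for m
  proof -
    have "(\<Sum>i<n. \<Sum>j<n. e m i * cnj (e m j) / (1 - a m i * cnj (a m j))) =
        (\<Sum>i<n. \<Sum>j<n. lam i * cnj (lam j) / (1 - z i * cnj (z j)))"
      unfolding e_def a_def by (intro sum.cong refl key_eq hu') (simp_all add: hz')
    moreover have "(\<lambda>k. (cmod (\<Sum>i<n. e m i * a m i ^ k))\<^sup>2) sums
        Re (\<Sum>i<n. \<Sum>j<n. e m i * cnj (e m j) / (1 - a m i * cnj (a m j)))"
      by (rule sq_sums) (rule ha)
    ultimately show ?thesis unfolding \<alpha>_def K_def by simp
  qed
  define C where "C = (\<Sum>i<n. cmod (lam i) / (1 - cmod (z i)))"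
  have eps_le: "\<epsilon> m \<le> sqrt (1 - (cmod (u m))\<^sup>2) * C" for m
  proof -
    have "\<epsilon> m \<le> (\<Sum>i<n. cmod (lam i) * sqrt (1 - (cmod (u m))\<^sup>2) / (1 - cmod (z i)))"
      unfolding \<epsilon>_def e_def by (intro sum_mono Delta_inv_bound hu') (simp add: hz')
    also have "\<dots> = sqrt (1 - (cmod (u m))\<^sup>2) * C"
      unfolding C_def by (simp add: sum_distrib_left ac_simps)
    finally show ?thesis .
  qed
  have eps_lim: "\<epsilon> \<longlonglongrightarrow> 0"
  proof (rule tendsto_sandwich[where f="\<lambda>_. 0" and h="\<lambda>m. sqrt (1 - (cmod (u m))\<^sup>2) * C"])
    show "\<forall>\<^sub>F m in sequentially. 0 \<le> \<epsilon> m" using eps0 by simp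
    show "\<forall>\<^sub>F m in sequentially. \<epsilon> m \<le> sqrt (1 - (cmod (u m))\<^sup>2) * C" using eps_le by simp
    have "(\<lambda>m. sqrt (1 - (cmod (u m))\<^sup>2) * C) \<longlonglongrightarrow> sqrt (1 - 1\<^sup>2) * C"
      by (intro tendsto_intros hlim)
    then show "(\<lambda>m. sqrt (1 - (cmod (u m))\<^sup>2) * C) \<longlonglongrightarrow> 0" by simp
  qed simp
  have levy: "(\<lambda>m. char (distr M borel (Lf m)) t) \<longlonglongrightarrow> char (distr N borel Rf) t" for t
  proof -
    define L where "L = complex_of_real (exp (- (t\<^sup>2 * K / 4)))"
    define G where "G m = MP.expectation (\<lambda>\<omega>. min (6 * (cmod (X 0 \<omega>))\<^sup>2) (\<bar>t\<bar> * \<epsilon> m * (cmod (X 0 \<omega>)) ^ 3))" for m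
    define bnd where "bnd m = K * (t\<^sup>2 / 6 * G m) + t\<^sup>2 * (\<epsilon> m)\<^sup>2 / 4 * (t\<^sup>2 * K / 4)" for m
    have G_lim: "G \<longlonglongrightarrow> 0"
    proof -
      have "(\<lambda>m. MP.expectation (\<lambda>\<omega>. min (6 * (cmod (X 0 \<omega>))\<^sup>2) (\<bar>t\<bar> * \<epsilon> m * (cmod (X 0 \<omega>)) ^ 3)))
          \<longlonglongrightarrow> MP.expectation (\<lambda>\<omega>. 0)"
      proof (rule integral_dominated_convergence[where w="\<lambda>\<omega>. 6 * (cmod (X 0 \<omega>))\<^sup>2"])
        show "integrable M (\<lambda>\<omega>. 6 * (cmod (X 0 \<omega>))\<^sup>2)" using X_sq_int by simp
        show "AE \<omega> in M. (\<lambda>m. min (6 * (cmod (X 0 \<omega>))\<^sup>2) (\<bar>t\<bar> * \<epsilon> m * (cmod (X 0 \<omega>)) ^ 3)) \<longlonglongrightarrow> 0"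
        proof (intro AE_I2)
          fix \<omega>
          have "(\<lambda>m. min (6 * (cmod (X 0 \<omega>))\<^sup>2) (\<bar>t\<bar> * \<epsilon> m * (cmod (X 0 \<omega>)) ^ 3)) \<longlonglongrightarrow>
              min (6 * (cmod (X 0 \<omega>))\<^sup>2) (\<bar>t\<bar> * 0 * (cmod (X 0 \<omega>)) ^ 3)"
            by (intro tendsto_intros eps_lim)
          then show "(\<lambda>m. min (6 * (cmod (X 0 \<omega>))\<^sup>2) (\<bar>t\<bar> * \<epsilon> m * (cmod (X 0 \<omega>)) ^ 3)) \<longlonglongrightarrow> 0"
            by simp
        qed
        fix m
        show "AE \<omega> in M. norm (min (6 * (cmod (X 0 \<omega>))\<^sup>2) (\<bar>t\<bar> * \<epsilon> m * (cmod (X 0 \<omega>)) ^ 3)) \<le> 6 * (cmod (X 0 \<omega>))\<^sup>2"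
          using eps0[of m] by (intro AE_I2) simp
      qed simp_all
      then show ?thesis unfolding G_def by simp
    qed
    have bnd_lim: "bnd \<longlonglongrightarrow> 0"
    proof -
      have "bnd \<longlonglongrightarrow> K * (t\<^sup>2 / 6 * 0) + t\<^sup>2 * 0\<^sup>2 / 4 * (t\<^sup>2 * K / 4)"
        unfolding bnd_def[abs_def] by (intro tendsto_intros G_lim eps_lim) simp_all
      then show ?thesis by simp
    qed
    have tl: "(\<lambda>m. t\<^sup>2 * (\<epsilon> m)\<^sup>2 / 4) \<longlonglongrightarrow> t\<^sup>2 * 0\<^sup>2 / 4" by (intro tendsto_intros eps_lim) simp_all
    have "\<forall>\<^sub>F m in sequentially. t\<^sup>2 * (\<epsilon> m)\<^sup>2 / 4 < 1" using order_tendstoD(2)[OF tl, of 1] by simp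
    then have ev: "\<forall>\<^sub>F m in sequentially. cmod (char (distr M borel (Lf m)) t - L) \<le> bnd m"
    proof eventually_elim
      case (elim m)
      have lim: "(\<lambda>N. \<Prod>k<N. char (distr M borel (\<lambda>\<omega>. Re (\<alpha> m k * X 0 \<omega>))) t) \<longlonglongrightarrow> char (distr M borel (Lf m)) t"
        unfolding Lf_def \<alpha>_def by (rule char_limit(2)[OF M Xm X_indep X_ident X_int ha])
      show ?case
        unfolding L_def bnd_def G_def
        by (rule core_bound[OF M Xm X_sq_int X_mean X_var X_ReIm X_cov alpha_le _ Ha lim])
           (use elim in simp)
    qed
    have "(\<lambda>m. char (distr M borel (Lf m)) t - L) \<longlonglongrightarrow> 0"
      by (rule Lim_null_comparison[OF ev bnd_lim])
    then have "(\<lambda>m. char (distr M borel (Lf m)) t) \<longlonglongrightarrow> L" by (simp add: LIM_zero_iff)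
    then show ?thesis unfolding L_def charR .
  qed
  have "weak_conv_m (\<lambda>m. distr M borel (Lf m)) (distr N borel Rf)"
  proof (rule levy_continuity)
    show "real_distribution (distr M borel (Lf m))" for m using Lfm[of m] by (rule MP.real_distribution_distr)
    show "real_distribution (distr N borel Rf)" using Rfm by (rule NP.real_distribution_distr)
  qed (rule levy)
  then show "weak_conv_m
                (\<lambda>m. distr M borel (\<lambda>\<omega>. Re (\<Sum>i<n. lam i *
                        rps (\<lambda>k. X k \<omega>) (Phi (u m) (z i)) / Delta (u m) (z i))))
                (distr N borel Rf)"
    by (simp only: Lf_eq)
qed

end
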